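(* Let $A\subset\mathbb{R}$ be compact. For $m\in\mathbb{N}$ let $$A_{m,0}=P_{0}\circ P_{-1/2^m}\circ P_{-2/2^m}\circ\cdots\circ P_{(-2^{2m}+1)/2^m}\circ P_{-2^{2m}/2^m}\,A ,$$ i.e. the successive polarizations $P_{k/2^m}$ for $k=-2^{2m},-2^{2m}+1,\dots,0$ applied to $A$ in increasing order of $k$. Then $\|1_{A_{m,0}}-1_{S(A)}\|_{L^1(\mathbb{R})}\to0$ as $m\to\infty$, where $S(A)=[-r_A,r_A]\cup(A\cap[0,\infty))$ and $r_A\ge0$ is chosen so that $\mathcal H^1(S(A))=\mathcal H^1(A)$.
   Context: For $a\in\mathbb{R}$, $P_a$ denotes polarization in $\mathbb{R}$ with respect to the point $a$ and the usual orientation: writing $A'=2a-A$ for the reflection of $A$ in $a$, $P_aA=\big((A\cup A')\cap[a,\infty)\big)\cup\big((A\cap A')\cap(-\infty,a]\big)$. The set $S(A)$ is the image of $A$ under the Solynin set map with respect to $\{0\}$. *)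

theory Defs
  imports "HOL-Analysis.Analysis"
begin

definition reflect_pt :: "real \<Rightarrow> real set \<Rightarrow> real set" where
  "reflect_pt a A = (\<lambda>x. 2 * a - x) ` A"

definition polarize :: "real \<Rightarrow> real set \<Rightarrow> real set" where
  "polarize a A = ((A \<union> reflect_pt a A) \<inter> {a..}) \<union> ((A \<inter> reflect_pt a A) \<inter> {..a})"

text \<open>The radius r_A >= 0 with H^1([-r,r] \<union> (A \<inter> [0,oo))) = H^1(A);
  on the real line H^1 is Lebesgue measure.\<close>
definition solynin_radius :: "real set \<Rightarrow> real" where
  "solynin_radius A = (SOME r. r \<ge> 0 \<and>
      measure lebesgue ({-r..r} \<union> (A \<inter> {0..})) = measure lebesgue A)"

definition solynin :: "real set \<Rightarrow> real set" where
  "solynin A = {- solynin_radius A .. solynin_radius A} \<union> (A \<inter> {0..})"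

definition A_m0 :: "nat \<Rightarrow> real set \<Rightarrow> real set" where
  "A_m0 m A = fold (\<lambda>k B. polarize (real_of_int k / 2 ^ m) B) [- (2 ^ (2 * m)) .. 0] A"

end

theory Submission
  imports Defs
begin

definition Dd :: "real set \<Rightarrow> real set \<Rightarrow> ennreal" where
  "Dd X Y = (\<integral>\<^sup>+ x. ennreal \<bar>indicator X x - indicator Y x\<bar> \<partial>lborel)"

lemma reflect_pt_vimage: "reflect_pt a X = (\<lambda>x. 2 * a - x) -` X"
proof (intro set_eqI iffI)
  fix x assume "x \<in> reflect_pt a X" then show "x \<in> (\<lambda>x. 2 * a - x) -` X"
    unfolding reflect_pt_def by auto
next
  fix x assume x: "x \<in> (\<lambda>x. 2 * a - x) -` X"
  have "x = 2 * a - (2 * a - x)" by simp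
  with x show "x \<in> reflect_pt a X" unfolding reflect_pt_def by blast
qed

lemma polarize_borel[measurable]:
  assumes "X \<in> sets borel" shows "polarize a X \<in> sets borel"
proof -
  have "(\<lambda>x::real. 2 * a - x) -` X \<in> sets borel"
    using measurable_sets_borel[of "\<lambda>x::real. 2 * a - x" borel X] assms by auto
  then show ?thesis using assms unfolding polarize_def reflect_pt_vimage by auto
qed

lemma ind_polarize_ge:
  assumes "a \<le> x"
  shows "(indicator (polarize a X) x :: real) = max (indicator X x) (indicator X (2*a - x))"
  using assms unfolding polarize_def reflect_pt_vimage by (auto simp: indicator_def)

lemma ind_polarize_le:
  assumes "x \<le> a"
  shows "(indicator (polarize a X) x :: real) = min (indicator X x) (indicator X (2*a - x))"
  using assms unfolding polarize_def reflect_pt_vimage by (auto simp: indicator_def)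

lemma nn_reflect_split:
  fixes f :: "real \<Rightarrow> ennreal"
  assumes [measurable]: "f \<in> borel_measurable borel"
  shows "(\<integral>\<^sup>+x. f x \<partial>lborel) = (\<integral>\<^sup>+x. (f x + f (2*a - x)) * indicator {a<..} x \<partial>lborel)"
proof -
  have "(\<integral>\<^sup>+x. f x \<partial>lborel) = (\<integral>\<^sup>+x. f x * indicator {a<..} x + f x * indicator {..a} x \<partial>lborel)"
    by (intro nn_integral_cong) (auto simp: indicator_def)
  also have "\<dots> = (\<integral>\<^sup>+x. f x * indicator {a<..} x \<partial>lborel) + (\<integral>\<^sup>+x. f x * indicator {..a} x \<partial>lborel)"
    by (intro nn_integral_add) auto
  also have "(\<integral>\<^sup>+x. f x * indicator {..a} x \<partial>lborel)
      = (\<integral>\<^sup>+x. f (2*a - x) * indicator {..a} (2*a - x) \<partial>lborel)"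
    using nn_integral_real_affine[of "\<lambda>x. f x * indicator {..a} x" "-1" "2*a"] by simp
  also have "\<dots> = (\<integral>\<^sup>+x. f (2*a - x) * indicator {a<..} x \<partial>lborel)"
    by (intro nn_integral_cong_AE, use AE_lborel_singleton[of a] in eventually_elim)
       (auto simp: indicator_def)
  also have "(\<integral>\<^sup>+x. f x * indicator {a<..} x \<partial>lborel) + (\<integral>\<^sup>+x. f (2*a - x) * indicator {a<..} x \<partial>lborel)
     = (\<integral>\<^sup>+x. f x * indicator {a<..} x + f (2*a - x) * indicator {a<..} x \<partial>lborel)"
    by (intro nn_integral_add[symmetric]) auto
  also have "\<dots> = (\<integral>\<^sup>+x. (f x + f (2*a - x)) * indicator {a<..} x \<partial>lborel)"
    by (intro nn_integral_cong) (simp add: distrib_right)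
  finally show ?thesis .
qed

lemma max_min_abs_ineq:
  fixes p q r s :: real
  shows "\<bar>max p q - max r s\<bar> + \<bar>min q p - min s r\<bar> \<le> \<bar>p - r\<bar> + \<bar>q - s\<bar>"
  unfolding max_def min_def by (simp split: if_split abs_split; linarith)
lemma ennreal_tri:
  fixes a b c :: real
  shows "ennreal \<bar>a - c\<bar> \<le> ennreal \<bar>a - b\<bar> + ennreal \<bar>b - c\<bar>"
proof -
  have eq: "ennreal \<bar>a-b\<bar> + ennreal \<bar>b-c\<bar> = ennreal (\<bar>a-b\<bar> + \<bar>b-c\<bar>)"
    by (rule ennreal_plus[symmetric]) auto
  show ?thesis unfolding eq by (rule ennreal_leI) arith
qed
lemma ennreal_abs_add_le:
  fixes a b c d :: real
  assumes "\<bar>a\<bar> + \<bar>b\<bar> \<le> \<bar>c\<bar> + \<bar>d\<bar>"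
  shows "ennreal \<bar>a\<bar> + ennreal \<bar>b\<bar> \<le> ennreal \<bar>c\<bar> + ennreal \<bar>d\<bar>"
proof -
  have e1: "ennreal \<bar>a\<bar> + ennreal \<bar>b\<bar> = ennreal (\<bar>a\<bar> + \<bar>b\<bar>)" by (rule ennreal_plus[symmetric]) auto
  have e2: "ennreal \<bar>c\<bar> + ennreal \<bar>d\<bar> = ennreal (\<bar>c\<bar> + \<bar>d\<bar>)" by (rule ennreal_plus[symmetric]) auto
  show ?thesis unfolding e1 e2 by (rule ennreal_leI) (rule assms)
qed

lemma Dd_polarize:
  assumes [measurable]: "X \<in> sets borel" "Y \<in> sets borel"
  shows "Dd (polarize a X) (polarize a Y) \<le> Dd X Y"
proof -
  let ?g = "\<lambda>x. ennreal \<bar>indicator (polarize a X) x - indicator (polarize a Y) x\<bar>"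
  let ?f = "\<lambda>x. ennreal \<bar>indicator X x - indicator Y x\<bar>"
  have "Dd (polarize a X) (polarize a Y) = (\<integral>\<^sup>+x. (?g x + ?g (2*a - x)) * indicator {a<..} x \<partial>lborel)"
    unfolding Dd_def by (intro nn_reflect_split) measurable
  also have "\<dots> \<le> (\<integral>\<^sup>+x. (?f x + ?f (2*a - x)) * indicator {a<..} x \<partial>lborel)"
  proof (intro nn_integral_mono)
    fix x
    show "(?g x + ?g (2*a - x)) * indicator {a<..} x \<le> (?f x + ?f (2*a - x)) * indicator {a<..} x"
    proof (cases "a < x")
      case True
      have e1: "(indicator (polarize a X) x :: real) = max (indicator X x) (indicator X (2*a - x))"
        "(indicator (polarize a Y) x :: real) = max (indicator Y x) (indicator Y (2*a - x))"
        using True by (auto intro!: ind_polarize_ge)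
      have e2: "(indicator (polarize a X) (2*a - x) :: real) = min (indicator X (2*a - x)) (indicator X x)"
        "(indicator (polarize a Y) (2*a - x) :: real) = min (indicator Y (2*a - x)) (indicator Y x)"
        using True ind_polarize_le[of "2*a - x" a] by auto
      have "?g x + ?g (2*a - x) \<le> ?f x + ?f (2*a - x)"
        unfolding e1 e2
        by (intro ennreal_abs_add_le max_min_abs_ineq)
      then show ?thesis using True by simp
    qed simp
  qed
  also have "\<dots> = Dd X Y"
    unfolding Dd_def by (intro nn_reflect_split[symmetric]) measurable
  finally show ?thesis .
qed

lemma emeasure_polarize:
  assumes [measurable]: "X \<in> sets borel"
  shows "emeasure lborel (polarize a X) = emeasure lborel X"
proof -
  let ?g = "\<lambda>x. indicator (polarize a X) x :: ennreal"
  let ?f = "\<lambda>x. indicator X x :: ennreal"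
  have "emeasure lborel (polarize a X) = (\<integral>\<^sup>+x. ?g x \<partial>lborel)"
    by (simp add: nn_integral_indicator)
  also have "\<dots> = (\<integral>\<^sup>+x. (?g x + ?g (2*a - x)) * indicator {a<..} x \<partial>lborel)"
    by (intro nn_reflect_split) measurable
  also have "\<dots> = (\<integral>\<^sup>+x. (?f x + ?f (2*a - x)) * indicator {a<..} x \<partial>lborel)"
  proof (intro nn_integral_cong)
    fix x
    show "(?g x + ?g (2*a - x)) * indicator {a<..} x = (?f x + ?f (2*a - x)) * indicator {a<..} x"
    proof (cases "a < x")
      case True
      have e1: "x \<in> polarize a X \<longleftrightarrow> x \<in> X \<or> 2*a - x \<in> X"
        using True unfolding polarize_def reflect_pt_vimage by auto
      have e2: "2*a - x \<in> polarize a X \<longleftrightarrow> x \<in> X \<and> 2*a - x \<in> X"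
        using True unfolding polarize_def reflect_pt_vimage by auto
      show ?thesis using True e1 e2 by (auto simp: indicator_def)
    qed simp
  qed
  also have "\<dots> = (\<integral>\<^sup>+x. ?f x \<partial>lborel)"
    by (intro nn_reflect_split[symmetric]) measurable
  also have "\<dots> = emeasure lborel X"
    by (simp add: nn_integral_indicator)
  finally show ?thesis .
qed

lemma Dd_borel_meas:
  assumes [measurable]: "X \<in> sets borel" "Y \<in> sets borel"
  shows "(\<lambda>x. ennreal \<bar>indicator X x - indicator Y x\<bar>) \<in> borel_measurable borel"
  by measurable

lemma Dd_triangle:
  assumes [measurable]: "X \<in> sets borel" "Y \<in> sets borel" "Z \<in> sets borel"
  shows "Dd X Z \<le> Dd X Y + Dd Y Z"
proof -
  have "Dd X Z \<le> (\<integral>\<^sup>+x. ennreal \<bar>indicator X x - indicator Y x\<bar> + ennreal \<bar>indicator Y x - indicator Z x\<bar> \<partial>lborel)"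
    unfolding Dd_def
    by (intro nn_integral_mono ennreal_tri)
  also have "\<dots> = Dd X Y + Dd Y Z"
    unfolding Dd_def by (intro nn_integral_add) auto
  finally show ?thesis .
qed

lemma Dd_sym: "Dd X Y = Dd Y X"
  unfolding Dd_def by (simp add: abs_minus_commute)

lemma Dd_self[simp]: "Dd X X = 0"
  unfolding Dd_def by simp

lemma Dd_eq_emeasure:
  assumes [measurable]: "X \<in> sets borel" "Y \<in> sets borel"
  shows "Dd X Y = emeasure lborel ((X - Y) \<union> (Y - X))"
proof -
  have "Dd X Y = (\<integral>\<^sup>+x. indicator ((X - Y) \<union> (Y - X)) x \<partial>lborel)"
    unfolding Dd_def by (intro nn_integral_cong) (auto simp: indicator_def)
  then show ?thesis by (simp add: nn_integral_indicator)
qed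

lemma Dd_le_emeasure:
  assumes [measurable]: "X \<in> sets borel" "Y \<in> sets borel" "W \<in> sets borel"
    and "\<And>x. x \<notin> W \<Longrightarrow> (x \<in> X \<longleftrightarrow> x \<in> Y)"
  shows "Dd X Y \<le> emeasure lborel W"
proof -
  have "Dd X Y = emeasure lborel ((X - Y) \<union> (Y - X))" by (rule Dd_eq_emeasure) fact+
  also have "\<dots> \<le> emeasure lborel W"
    using assms(4) by (intro emeasure_mono) auto
  finally show ?thesis .
qed

definition PF :: "real \<Rightarrow> int list \<Rightarrow> real set \<Rightarrow> real set" where
  "PF d ks X = fold (\<lambda>k B. polarize (real_of_int k * d) B) ks X"

lemma PF_simps[simp]: "PF d [] X = X" "PF d (k # ks) X = PF d ks (polarize (real_of_int k * d) X)"
  by (simp_all add: PF_def)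

lemma PF_borel: "X \<in> sets borel \<Longrightarrow> PF d ks X \<in> sets borel"
proof (induction ks arbitrary: X)
  case (Cons k ks)
  show ?case unfolding PF_simps by (rule Cons.IH[OF polarize_borel[OF Cons.prems]])
qed (simp only: PF_simps)

lemma PF_contract:
  assumes "X \<in> sets borel" "Y \<in> sets borel"
  shows "Dd (PF d ks X) (PF d ks Y) \<le> Dd X Y"
  using assms
proof (induction ks arbitrary: X Y)
  case (Cons k ks)
  have "Dd (PF d ks (polarize (real_of_int k * d) X)) (PF d ks (polarize (real_of_int k * d) Y))
     \<le> Dd (polarize (real_of_int k * d) X) (polarize (real_of_int k * d) Y)"
    by (rule Cons.IH[OF polarize_borel[OF Cons.prems(1)] polarize_borel[OF Cons.prems(2)]])
  moreover have "Dd (polarize (real_of_int k * d) X) (polarize (real_of_int k * d) Y) \<le> Dd X Y"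
    by (rule Dd_polarize[OF Cons.prems])
  ultimately show ?case unfolding PF_simps by (rule order_trans)
qed (simp only: PF_simps)

lemma PF_emeasure: "X \<in> sets borel \<Longrightarrow> emeasure lborel (PF d ks X) = emeasure lborel X"
proof (induction ks arbitrary: X)
  case (Cons k ks)
  show ?case unfolding PF_simps Cons.IH[OF polarize_borel[OF Cons.prems]] by (rule emeasure_polarize[OF Cons.prems])
qed (simp only: PF_simps)

lemma A_m0_PF: "A_m0 m X = PF (1 / 2 ^ m) [- (2 ^ (2 * m)) .. 0] X"
  unfolding A_m0_def PF_def by simp

definition cs :: "real \<Rightarrow> int set \<Rightarrow> real set" where
  "cs d E = {x. \<lfloor>x / d\<rfloor> \<in> E}"

definition Qd :: "int \<Rightarrow> int set \<Rightarrow> int set" where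
  "Qd k E = {n. (k \<le> n \<and> (n \<in> E \<or> 2*k-1-n \<in> E)) \<or> (n < k \<and> n \<in> E \<and> 2*k-1-n \<in> E)}"

lemma cs_borel: "cs d E \<in> sets borel"
proof -
  have "cs d E = (\<Union>j\<in>E. {x. of_int j \<le> x / d \<and> x / d < of_int j + 1})"
  proof (intro set_eqI iffI)
    fix x assume "x \<in> cs d E"
    then have hx: "\<lfloor>x / d\<rfloor> \<in> E" unfolding cs_def by simp
    have "of_int \<lfloor>x / d\<rfloor> \<le> x / d" "x / d < of_int \<lfloor>x / d\<rfloor> + 1" by linarith+
    then show "x \<in> (\<Union>j\<in>E. {x. of_int j \<le> x / d \<and> x / d < of_int j + 1})"
      using hx by blast
  next
    fix x assume "x \<in> (\<Union>j\<in>E. {x. of_int j \<le> x / d \<and> x / d < of_int j + 1})"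
    then obtain j where j: "j \<in> E" "of_int j \<le> x / d" "x / d < of_int j + 1" by auto
    then have "\<lfloor>x / d\<rfloor> = j" by (intro floor_unique)
    with j show "x \<in> cs d E" unfolding cs_def by simp
  qed
  also have "\<dots> \<in> sets borel"
    by (intro sets.countable_UN') (auto simp: countable_subset[OF subset_UNIV] intro!: pred_intros_logic)
  finally show ?thesis .
qed

lemma floor_reflect:
  fixes d x :: real
  assumes d: "d > 0" and nx: "\<And>j::int. x \<noteq> of_int j * d"
  shows "\<lfloor>(2 * (of_int k * d) - x) / d\<rfloor> = 2*k - 1 - \<lfloor>x / d\<rfloor>"
    and "(of_int k * d \<le> x) \<longleftrightarrow> k \<le> \<lfloor>x / d\<rfloor>"
    and "x \<noteq> of_int k * d"
proof -
  let ?j = "\<lfloor>x / d\<rfloor>"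
  have a: "of_int ?j \<le> x / d" "x / d < of_int ?j + 1" by linarith+
  have "x / d \<noteq> of_int ?j" using nx[of ?j] d by (auto simp: field_simps)
  with a have b: "of_int ?j < x / d" by linarith
  have e: "(2 * (of_int k * d) - x) / d = 2 * of_int k - x / d" using d by (simp add: field_simps)
  have c: "(of_int (2*k - 1 - ?j) :: real) = 2 * of_int k - 1 - of_int ?j" by simp
  show "\<lfloor>(2 * (of_int k * d) - x) / d\<rfloor> = 2*k - 1 - ?j"
    unfolding e by (rule floor_unique) (simp_all only: c; use a b in linarith)+
  have "(of_int k * d \<le> x) \<longleftrightarrow> of_int k \<le> x / d" using d by (simp add: field_simps)
  also have "\<dots> \<longleftrightarrow> k \<le> ?j" by (simp add: le_floor_iff)
  finally show "(of_int k * d \<le> x) \<longleftrightarrow> k \<le> ?j" .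
  show "x \<noteq> of_int k * d" using nx .
qed

lemma cell_polarize:
  assumes d: "d > 0"
  shows "Dd (polarize (of_int k * d) (cs d E)) (cs d (Qd k E)) = 0"
proof -
  have "AE x in lborel. x \<notin> range (\<lambda>j::int. of_int j * d)"
    by (intro AE_not_in countable_imp_null_set_lborel) auto
  then have ae: "AE x in lborel. ennreal \<bar>indicator (polarize (of_int k * d) (cs d E)) x - indicator (cs d (Qd k E)) x\<bar> = 0"
  proof (eventually_elim)
    case (elim x)
    then have nx: "\<And>j::int. x \<noteq> of_int j * d" by auto
    note fr = floor_reflect[OF d nx, of k]
    have "x \<in> polarize (of_int k * d) (cs d E) \<longleftrightarrow> x \<in> cs d (Qd k E)"
      unfolding polarize_def reflect_pt_vimage cs_def Qd_def using fr by auto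
    then show ?case by (simp add: indicator_def)
  qed
  have "Dd (polarize (of_int k * d) (cs d E)) (cs d (Qd k E)) = (\<integral>\<^sup>+x. 0 \<partial>lborel)"
    unfolding Dd_def by (subst nn_integral_cong_AE[OF ae]) simp
  then show ?thesis by simp
qed

lemma PF_cells:
  assumes d: "d > 0"
  shows "Dd (PF d ks (cs d E)) (cs d (fold Qd ks E)) = 0"
proof (induction ks arbitrary: E)
  case (Cons k ks)
  let ?P = "polarize (of_int k * d) (cs d E)"
  have "Dd (PF d ks ?P) (cs d (fold Qd ks (Qd k E)))
      \<le> Dd (PF d ks ?P) (PF d ks (cs d (Qd k E))) + Dd (PF d ks (cs d (Qd k E))) (cs d (fold Qd ks (Qd k E)))"
    by (intro Dd_triangle PF_borel polarize_borel cs_borel)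
  also have "\<dots> \<le> Dd ?P (cs d (Qd k E)) + 0"
    using Cons.IH[of "Qd k E"] by (intro add_mono PF_contract polarize_borel cs_borel) auto
  also have "\<dots> = 0" using cell_polarize[OF d] by simp
  finally show ?case by simp
qed simp

definition aligned :: "int set \<Rightarrow> bool" where
  "aligned E = (\<forall>p. even p \<longrightarrow> (p \<in> E \<longleftrightarrow> p + 1 \<in> E))"

definition blk :: "int \<Rightarrow> int \<Rightarrow> int set \<Rightarrow> int set" where
  "blk c h E = {c-h..<c+h} \<union> {n\<in>E. c+h \<le> n}"

definition dinv :: "int \<Rightarrow> int set \<Rightarrow> int set \<Rightarrow> bool" where
  "dinv k T E = (\<exists>c h. k \<le> c \<and> c \<le> k+1 \<and> 0 \<le> h \<and> even (c+h) \<and> T = blk c h E)"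

lemma blk_mem: "x \<in> blk c h E \<longleftrightarrow> (c-h \<le> x \<and> x < c+h) \<or> (x \<in> E \<and> c+h \<le> x)"
  unfolding blk_def by auto

lemma Qd_mem: "n \<in> Qd k T \<longleftrightarrow> (k \<le> n \<and> (n \<in> T \<or> 2*k-1-n \<in> T)) \<or> (n < k \<and> n \<in> T \<and> 2*k-1-n \<in> T)"
  unfolding Qd_def by simp

lemma Qd_blk_fixed:
  assumes "k \<le> c" "0 \<le> h"
  shows "Qd k (blk c h E) = blk c h E"
proof (intro set_eqI)
  fix n
  show "n \<in> Qd k (blk c h E) \<longleftrightarrow> n \<in> blk c h E"
    unfolding Qd_mem blk_mem using assms by smt
qed

lemma blk_grow:
  assumes "c+h \<in> E" "c+h+1 \<in> E" "0 \<le> h"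
  shows "blk c h E = blk (c+1) (h+1) E"
proof (intro set_eqI)
  fix x
  show "x \<in> blk c h E \<longleftrightarrow> x \<in> blk (c+1) (h+1) E"
    unfolding blk_mem using assms by smt
qed

lemma Qd_blk_move:
  assumes "c+h \<notin> E" "c+h+1 \<notin> E" "0 \<le> h"
  shows "Qd (c+1) (blk c h E) = blk (c+2) h E"
proof (intro set_eqI)
  fix n
  show "n \<in> Qd (c+1) (blk c h E) \<longleftrightarrow> n \<in> blk (c+2) h E"
    unfolding Qd_mem blk_mem using assms by smt
qed

lemma dinv_step:
  assumes al: "aligned E" and inv: "dinv k T E"
  shows "dinv (k+1) (Qd (k+1) T) E"
proof -
  obtain c h where ch: "k \<le> c" "c \<le> k+1" "0 \<le> h" "even (c+h)" "T = blk c h E"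
    using inv unfolding dinv_def by blast
  show ?thesis
  proof (cases "c = k+1")
    case True
    then have "Qd (k+1) T = T" using ch Qd_blk_fixed[of "k+1" c h E] by simp
    then have "k+1 \<le> c \<and> c \<le> k+1+1 \<and> 0 \<le> h \<and> even (c+h) \<and> Qd (k+1) T = blk c h E"
      using ch True by simp
    then show ?thesis unfolding dinv_def by blast
  next
    case False
    then have ck: "c = k" using ch by simp
    show ?thesis
    proof (cases "c+h \<in> E")
      case True
      then have "c+h+1 \<in> E" using al ch(4) unfolding aligned_def by blast
      then have T: "T = blk (c+1) (h+1) E" using True ch blk_grow[of c h E] by simp
      have "Qd (k+1) T = T" using T ck ch Qd_blk_fixed[of "k+1" "c+1" "h+1" E] by simp
      then have "k+1 \<le> c+1 \<and> c+1 \<le> k+1+1 \<and> 0 \<le> h+1 \<and> even ((c+1)+(h+1)) \<and> Qd (k+1) T = blk (c+1) (h+1) E"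
        using T ck ch by simp
      then show ?thesis unfolding dinv_def by blast
    next
      case False
      then have "c+h+1 \<notin> E" using al ch(4) unfolding aligned_def by blast
      then have "Qd (k+1) T = blk (c+2) h E" using False ch ck Qd_blk_move[of c h E] by simp
      then have "k+1 \<le> c+2 \<and> c+2 \<le> k+1+1 \<and> 0 \<le> h \<and> even ((c+2)+h) \<and> Qd (k+1) T = blk (c+2) h E"
        using ck ch by simp
      then show ?thesis unfolding dinv_def by blast
    qed
  qed
qed

lemma dinv_fold:
  assumes al: "aligned E" and sub: "E \<subseteq> {k0..}" and ev: "even k0"
  shows "dinv (k0 + int n - 1) (fold Qd [k0..k0 + int n - 1] E) E"
proof (induction n)
  case 0
  have "blk k0 0 E = E" using sub unfolding blk_def by auto
  moreover have f: "fold Qd [k0..k0 + int 0 - 1] E = E" by simp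
  ultimately show ?case unfolding dinv_def f
    by (intro exI[of _ k0] exI[of _ 0]) (simp add: ev)
next
  case (Suc n)
  have "[k0..k0 + int (Suc n) - 1] = [k0..k0 + int n - 1] @ [k0 + int n]"
    using upto_rec2[of k0 "k0 + int n"] by simp
  then have "fold Qd [k0..k0 + int (Suc n) - 1] E = Qd (k0 + int n) (fold Qd [k0..k0 + int n - 1] E)"
    by simp
  moreover have "dinv (k0 + int n - 1 + 1) (Qd (k0 + int n - 1 + 1) (fold Qd [k0..k0 + int n - 1] E)) E"
    by (rule dinv_step[OF al Suc.IH])
  ultimately show ?case by simp
qed

lemma dinv_final:
  assumes al: "aligned E" and sub: "E \<subseteq> {k0..}" and ev: "even k0" and k0: "k0 \<le> 0"
  shows "dinv 0 (fold Qd [k0..0] E) E"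
proof -
  have "dinv (k0 + int (nat (1 - k0)) - 1) (fold Qd [k0..k0 + int (nat (1 - k0)) - 1] E) E"
    by (rule dinv_fold[OF al sub ev])
  moreover have "k0 + int (nat (1 - k0)) - 1 = 0" using k0 by simp
  ultimately show ?thesis by simp
qed
lemma cs_blk:
  assumes d: "d > 0"
  shows "cs d (blk c h E) = {x. of_int (c-h) * d \<le> x \<and> x < of_int (c+h) * d} \<union> (cs d E \<inter> {of_int (c+h) * d..})"
proof -
  have 1: "(z \<le> x / d) \<longleftrightarrow> z * d \<le> x" for z :: real and x
    using d by (simp add: field_simps)
  have 2: "(x / d < z) \<longleftrightarrow> x < z * d" for z :: real and x
    using d by (simp add: field_simps)
  show ?thesis unfolding cs_def blk_def
    by (auto simp: le_floor_iff floor_less_iff 1 2)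
qed

definition fin :: "real set \<Rightarrow> bool" where
  "fin X = (X \<in> sets borel \<and> emeasure lborel X \<noteq> \<infinity>)"

definition SS :: "real \<Rightarrow> real set \<Rightarrow> real set" where
  "SS r X = {-r..r} \<union> (X \<inter> {0..})"

lemma solynin_SS: "solynin X = SS (solynin_radius X) X"
  unfolding solynin_def SS_def ..

lemma meas_mono:
  assumes "B \<in> sets M" "A \<subseteq> B" "emeasure M B \<noteq> \<infinity>"
  shows "measure M A \<le> measure M B"
  unfolding measure_def using assms emeasure_mono[OF assms(2,1)]
  by (intro enn2real_mono) (auto simp: less_top[symmetric])

lemma fin_subset: "fin X \<Longrightarrow> Y \<in> sets borel \<Longrightarrow> Y \<subseteq> X \<Longrightarrow> fin Y"
  unfolding fin_def using emeasure_mono[of Y X lborel] by (auto simp: top_unique)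

lemma fin_Un: "fin X \<Longrightarrow> fin Y \<Longrightarrow> fin (X \<union> Y)"
  unfolding fin_def using emeasure_subadditive[of X lborel Y] by (auto simp: top_unique ennreal_add_eq_top)

lemma fin_Icc: "fin {a..b::real}"
  unfolding fin_def by (simp add: emeasure_lborel_Icc_eq)

lemma fin_Ico: "fin {a..<b::real}"
  by (rule fin_subset[OF fin_Icc[of a b]]) auto

lemma fin_Ioc: "fin {a<..b::real}"
  by (rule fin_subset[OF fin_Icc[of a b]]) auto

lemma SS_borel: "X \<in> sets borel \<Longrightarrow> SS r X \<in> sets borel"
  unfolding SS_def by auto

lemma fin_SS: assumes "fin X" shows "fin (SS r X)"
proof -
  have XB: "X \<in> sets borel" using assms by (simp add: fin_def)
  have "fin (X \<inter> {0..})" by (rule fin_subset[OF assms]) (use XB in auto)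
  then show ?thesis unfolding SS_def by (intro fin_Un fin_Icc)
qed

lemma measure_Ico: "a \<le> b \<Longrightarrow> measure lborel {a..<b::real} = b - a"
  by (simp add: measure_def)

lemma measure_Ioc: "a \<le> b \<Longrightarrow> measure lborel {a<..b::real} = b - a"
  by (simp add: measure_def)

lemma SS_growth:
  assumes X: "fin X" and s: "0 \<le> s" "s \<le> r"
  shows "r - s \<le> measure lborel (SS r X) - measure lborel (SS s X)"
    and "measure lborel (SS r X) - measure lborel (SS s X) \<le> 2 * (r - s)"
proof -
  have fr: "fin (SS r X)" "fin (SS s X)" using fin_SS[OF X] by auto
  have sub: "SS s X \<subseteq> SS r X" using s unfolding SS_def by auto
  have eq: "measure lborel (SS r X) - measure lborel (SS s X) = measure lborel (SS r X - SS s X)"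
    using fr sub by (subst measure_Diff) (auto simp: fin_def)
  have fd: "fin (SS r X - SS s X)" by (rule fin_subset[OF fr(1)]) (use fr in \<open>auto simp: fin_def\<close>)
  have "{-r..<-s} \<subseteq> SS r X - SS s X" using s unfolding SS_def by auto
  then have "measure lborel {-r..<-s} \<le> measure lborel (SS r X - SS s X)"
    using fd by (intro meas_mono) (auto simp: fin_def)
  then show "r - s \<le> measure lborel (SS r X) - measure lborel (SS s X)"
    using s eq measure_Ico[of "-r" "-s"] by simp
  have "SS r X - SS s X \<subseteq> {-r..<-s} \<union> {s<..r}" using s unfolding SS_def by auto
  then have "measure lborel (SS r X - SS s X) \<le> measure lborel ({-r..<-s} \<union> {s<..r})"
    using fin_Un[OF fin_Ico[of "-r" "-s"] fin_Ioc[of s r]] by (intro meas_mono) (auto simp: fin_def)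
  also have "\<dots> \<le> measure lborel {-r..<-s} + measure lborel {s<..r}"
    by (rule measure_subadditive) (use fin_Ico[of "-r" "-s"] fin_Ioc[of s r] in \<open>auto simp: fin_def\<close>)
  finally show "measure lborel (SS r X) - measure lborel (SS s X) \<le> 2 * (r - s)"
    using s eq measure_Ico[of "-r" "-s"] measure_Ioc[of s r] by simp
qed

lemma SS_diff_abs:
  assumes X: "fin X" and s: "0 \<le> s" "0 \<le> r"
  shows "\<bar>measure lborel (SS r X) - measure lborel (SS s X)\<bar> \<le> 2 * \<bar>r - s\<bar>"
  using SS_growth[OF X s(1), of r] SS_growth[OF X s(2), of s] s
  by (cases "s \<le> r") auto

lemma radius_exists:
  assumes X: "fin X"
  shows "\<exists>r. r \<ge> 0 \<and> measure lebesgue ({-r..r} \<union> (X \<inter> {0..})) = measure lebesgue X"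
proof -
  let ?g = "\<lambda>r. measure lborel (SS r X)"
  let ?M = "measure lborel X"
  have XB: "X \<in> sets borel" using X by (simp add: fin_def)
  have M0: "0 \<le> ?M" by simp
  have s0: "SS 0 X = {0..0} \<union> (X \<inter> {0..})" unfolding SS_def by auto
  have fx: "fin (X \<inter> {0..})" by (rule fin_subset[OF X]) (use XB in auto)
  have "?g 0 \<le> measure lborel (X \<inter> {0..})"
    using measure_subadditive[of "{0..0::real}" lborel "X \<inter> {0..}"] fx fin_Icc[of 0 0]
    unfolding s0 by (simp add: fin_def)
  also have "measure lborel (X \<inter> {0..}) \<le> ?M"
    using X by (intro meas_mono) (auto simp: fin_def)
  finally have g0: "?g 0 \<le> ?M" .
  have "?M \<le> ?M - 0" by simp
  also have "\<dots> \<le> ?g ?M - ?g 0" by (rule SS_growth(1)[OF X order.refl M0])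
  also have "\<dots> \<le> ?g ?M" by simp
  finally have gM: "?M \<le> ?g ?M" .
  have "2-lipschitz_on {0..?M} ?g"
    by (intro lipschitz_onI) (auto simp: dist_real_def intro!: SS_diff_abs[OF X])
  then have "continuous_on {0..?M} ?g" by (rule lipschitz_on_continuous_on)
  then obtain r where r: "0 \<le> r" "r \<le> ?M" "?g r = ?M"
    using IVT'[of ?g 0 ?M ?M] g0 gM M0 by auto
  have "measure lebesgue ({-r..r} \<union> (X \<inter> {0..})) = ?g r"
    using SS_borel[OF XB, of r] unfolding SS_def by (simp add: sets_completionI_sets)
  moreover have "measure lebesgue X = ?M" using XB by simp
  ultimately show ?thesis using r by auto
qed

lemma radius_prop:
  assumes X: "fin X"
  shows "solynin_radius X \<ge> 0" "measure lborel (SS (solynin_radius X) X) = measure lborel X"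
proof -
  have "solynin_radius X \<ge> 0 \<and> measure lebesgue ({- solynin_radius X..solynin_radius X} \<union> (X \<inter> {0..})) = measure lebesgue X"
    unfolding solynin_radius_def by (rule someI_ex[OF radius_exists[OF X]])
  moreover have "X \<in> sets borel" using X by (simp add: fin_def)
  moreover note SS_borel[OF this, of "solynin_radius X"]
  ultimately show "solynin_radius X \<ge> 0" "measure lborel (SS (solynin_radius X) X) = measure lborel X"
    unfolding SS_def by simp_all
qed

definition dd :: "real set \<Rightarrow> real set \<Rightarrow> real" where
  "dd X Y = measure lborel ((X - Y) \<union> (Y - X))"

lemma fin_borel: "fin X \<Longrightarrow> X \<in> sets borel" by (simp add: fin_def)

lemma fin_symdiff: "fin X \<Longrightarrow> fin Y \<Longrightarrow> fin ((X - Y) \<union> (Y - X))"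
  by (rule fin_subset[OF fin_Un[of X Y]]) (auto simp: fin_def)

lemma Dd_fin: assumes "fin X" "fin Y" shows "Dd X Y = ennreal (dd X Y)"
  using Dd_eq_emeasure[OF fin_borel[OF assms(1)] fin_borel[OF assms(2)]] fin_symdiff[OF assms]
  unfolding dd_def fin_def by (simp add: emeasure_eq_ennreal_measure)

lemma dd_nonneg: "0 \<le> dd X Y" by (simp add: dd_def)

lemma meas_diff_le:
  assumes X: "fin X" and Y: "fin Y"
  shows "\<bar>measure lborel X - measure lborel Y\<bar> \<le> dd X Y"
proof -
  have S: "fin ((X - Y) \<union> (Y - X))" by (rule fin_symdiff[OF X Y])
  have "measure lborel X \<le> measure lborel (Y \<union> ((X - Y) \<union> (Y - X)))"
    using fin_Un[OF Y S] by (intro meas_mono) (auto simp: fin_def)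
  also have "\<dots> \<le> measure lborel Y + dd X Y"
    unfolding dd_def using Y S by (intro measure_subadditive) (auto simp: fin_def)
  finally have 1: "measure lborel X \<le> measure lborel Y + dd X Y" .
  have "measure lborel Y \<le> measure lborel (X \<union> ((X - Y) \<union> (Y - X)))"
    using fin_Un[OF X S] by (intro meas_mono) (auto simp: fin_def)
  also have "\<dots> \<le> measure lborel X + dd X Y"
    unfolding dd_def using X S by (intro measure_subadditive) (auto simp: fin_def)
  finally have 2: "measure lborel Y \<le> measure lborel X + dd X Y" .
  show ?thesis using 1 2 by linarith
qed

lemma Dd_zero_emeasure:
  assumes X: "X \<in> sets borel" and Y: "Y \<in> sets borel" and D: "Dd X Y = 0"
  shows "emeasure lborel X = emeasure lborel Y"
proof -
  have z: "emeasure lborel ((X - Y) \<union> (Y - X)) = 0" using D Dd_eq_emeasure[OF X Y] by simp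
  have "emeasure lborel X \<le> emeasure lborel (Y \<union> ((X - Y) \<union> (Y - X)))"
    using X Y by (intro emeasure_mono) auto
  also have "\<dots> \<le> emeasure lborel Y + emeasure lborel ((X - Y) \<union> (Y - X))"
    using X Y by (intro emeasure_subadditive) auto
  finally have 1: "emeasure lborel X \<le> emeasure lborel Y" using z by simp
  have "emeasure lborel Y \<le> emeasure lborel (X \<union> ((X - Y) \<union> (Y - X)))"
    using X Y by (intro emeasure_mono) auto
  also have "\<dots> \<le> emeasure lborel X + emeasure lborel ((X - Y) \<union> (Y - X))"
    using X Y by (intro emeasure_subadditive) auto
  finally have 2: "emeasure lborel Y \<le> emeasure lborel X" using z by simp
  show ?thesis using 1 2 by (rule antisym)
qed

lemma SS_Dd_le:
  assumes X: "fin X" and rs: "0 \<le> s" "s \<le> r"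
  shows "Dd (SS r X) (SS s X) = ennreal (measure lborel (SS r X) - measure lborel (SS s X))"
proof -
  have fr: "fin (SS r X)" "fin (SS s X)" using fin_SS[OF X] by auto
  have sub: "SS s X \<subseteq> SS r X" using rs unfolding SS_def by auto
  have e: "(SS r X - SS s X) \<union> (SS s X - SS r X) = SS r X - SS s X" using sub by blast
  have "Dd (SS r X) (SS s X) = emeasure lborel (SS r X - SS s X)"
    using Dd_eq_emeasure[OF fin_borel[OF fr(1)] fin_borel[OF fr(2)]] unfolding e .
  also have "\<dots> = ennreal (measure lborel (SS r X - SS s X))"
  proof (rule emeasure_eq_ennreal_measure)
    have "fin (SS r X - SS s X)" by (rule fin_subset[OF fr(1)]) (use fr in \<open>auto simp: fin_def\<close>)
    then show "emeasure lborel (SS r X - SS s X) \<noteq> top" by (simp add: fin_def)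
  qed
  also have "measure lborel (SS r X - SS s X) = measure lborel (SS r X) - measure lborel (SS s X)"
    using fr sub by (intro measure_Diff) (auto simp: fin_def)
  finally show ?thesis .
qed

lemma SS_Dd:
  assumes X: "fin X" and rs: "0 \<le> s" "0 \<le> r"
  shows "Dd (SS r X) (SS s X) = ennreal \<bar>measure lborel (SS r X) - measure lborel (SS s X)\<bar>"
proof (cases "s \<le> r")
  case True
  have "measure lborel (SS s X) \<le> measure lborel (SS r X)"
    using SS_growth(1)[OF X rs(1) True] True by linarith
  then show ?thesis using SS_Dd_le[OF X rs(1) True] by simp
next
  case False
  then have sr: "r \<le> s" by simp
  have "measure lborel (SS r X) \<le> measure lborel (SS s X)"
    using SS_growth(1)[OF X rs(2) sr] sr by linarith
  then show ?thesis using SS_Dd_le[OF X rs(2) sr] Dd_sym[of "SS r X"] by simp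
qed

lemma ennreal_tri3:
  assumes "a \<le> ennreal x" "b \<le> ennreal y" "0 \<le> x" "0 \<le> y"
  shows "a + b \<le> ennreal (x + y)"
  using add_mono[OF assms(1,2)] assms(3,4) by (simp add: ennreal_plus)

lemma S_lip:
  assumes A: "fin A" and C: "fin C"
  shows "Dd (solynin A) (solynin C) \<le> ennreal (3 * dd A C)"
proof -
  define r where "r = solynin_radius A"
  define s where "s = solynin_radius C"
  have r0: "0 \<le> r" and gr: "measure lborel (SS r A) = measure lborel A"
    using radius_prop[OF A] by (auto simp: r_def)
  have s0: "0 \<le> s" and gs: "measure lborel (SS s C) = measure lborel C"
    using radius_prop[OF C] by (auto simp: s_def)
  let ?Z = "SS r C"
  have fZ: "fin ?Z" "fin (SS r A)" "fin (SS s C)" using fin_SS A C by auto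
  have "Dd (SS r A) ?Z \<le> Dd A C"
    unfolding Dd_def
  proof (intro nn_integral_mono ennreal_leI)
    fix x
    show "\<bar>indicator (SS r A) x - indicator ?Z x\<bar> \<le> \<bar>indicator A x - indicator C x :: real\<bar>"
      by (auto simp: SS_def indicator_def)
  qed
  then have d1: "dd (SS r A) ?Z \<le> dd A C"
    using Dd_fin[OF fZ(2) fZ(1)] Dd_fin[OF A C] dd_nonneg by (simp add: ennreal_le_iff)
  have "\<bar>measure lborel ?Z - measure lborel C\<bar> \<le> 2 * dd A C"
    using meas_diff_le[OF fZ(2) fZ(1)] meas_diff_le[OF A C] d1 gr by linarith
  then have "Dd ?Z (SS s C) \<le> ennreal (2 * dd A C)"
    using SS_Dd[OF C s0 r0] gs by (simp add: ennreal_leI)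
  moreover have "Dd (SS r A) ?Z \<le> ennreal (dd A C)"
    using d1 Dd_fin[OF fZ(2) fZ(1)] by (simp add: ennreal_leI)
  moreover have "Dd (SS r A) (SS s C) \<le> Dd (SS r A) ?Z + Dd ?Z (SS s C)"
    using fZ by (intro Dd_triangle fin_borel)
  ultimately have "Dd (SS r A) (SS s C) \<le> ennreal (dd A C + 2 * dd A C)"
    using ennreal_tri3[of "Dd (SS r A) ?Z" "dd A C" "Dd ?Z (SS s C)" "2 * dd A C"] dd_nonneg[of A C]
    by (auto intro: order.trans)
  then show ?thesis unfolding solynin_SS r_def s_def by simp
qed

lemma final_block:
  assumes C: "fin C" and d: "d > 0" and c: "c = 0 \<or> c = (1::int)" and h: "0 \<le> (h::int)"
    and Beq: "B = {x. of_int (c-h) * d \<le> x \<and> x < of_int (c+h) * d} \<union> (C \<inter> {of_int (c+h) * d..})"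
    and Bm: "emeasure lborel B = emeasure lborel C"
  shows "Dd B (solynin C) \<le> ennreal (6 * d)"
proof -
  define \<rho> where "\<rho> = of_int h * d"
  have \<rho>0: "0 \<le> \<rho>" using h d by (simp add: \<rho>_def)
  define W where "W = {-\<rho>..d-\<rho>} \<union> ({\<rho>..\<rho>+d} \<union> {0..d})"
  let ?Z = "SS \<rho> C"
  have B2: "B = {x. of_int c * d - \<rho> \<le> x \<and> x < of_int c * d + \<rho>} \<union> (C \<inter> {of_int c * d + \<rho>..})"
    unfolding Beq \<rho>_def by (simp add: algebra_simps)
  have CB: "C \<in> sets borel" using C by (simp add: fin_def)
  have fB: "fin B"
  proof (rule fin_subset[OF fin_Un[OF fin_Icc[of "of_int c * d - \<rho>" "of_int c * d + \<rho>"] C]])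
    show "B \<in> sets borel" unfolding B2 using CB by measurable
    show "B \<subseteq> {of_int c * d - \<rho>..of_int c * d + \<rho>} \<union> C" unfolding B2 by auto
  qed
  have fZ: "fin ?Z" by (rule fin_SS[OF C])
  have W: "x \<notin> W \<Longrightarrow> (x \<in> B \<longleftrightarrow> x \<in> ?Z)" for x
    using c \<rho>0 d unfolding B2 W_def SS_def by auto
  have "Dd B ?Z \<le> emeasure lborel W"
    by (rule Dd_le_emeasure[OF fin_borel[OF fB] fin_borel[OF fZ]]) (auto simp: W_def W)
  also have "\<dots> \<le> emeasure lborel {-\<rho>..d-\<rho>} + (emeasure lborel {\<rho>..\<rho>+d} + emeasure lborel {0..d})"
    unfolding W_def
    by (rule order_trans[OF emeasure_subadditive add_mono[OF order.refl emeasure_subadditive]]) auto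
  also have "\<dots> = ennreal (3 * d)"
    using d by (simp add: ennreal_plus[symmetric] del: ennreal_plus)
  finally have D1: "Dd B ?Z \<le> ennreal (3 * d)" .
  then have "dd B ?Z \<le> 3 * d" using Dd_fin[OF fB fZ] d by (simp add: ennreal_le_iff)
  moreover have "measure lborel B = measure lborel C" using Bm by (simp add: measure_def)
  ultimately have "\<bar>measure lborel ?Z - measure lborel C\<bar> \<le> 3 * d"
    using meas_diff_le[OF fB fZ] by linarith
  then have D2: "Dd ?Z (solynin C) \<le> ennreal (3 * d)"
    unfolding solynin_SS using SS_Dd[OF C radius_prop(1)[OF C] \<rho>0] radius_prop(2)[OF C]
    by (simp add: ennreal_leI)
  have "Dd B (solynin C) \<le> Dd B ?Z + Dd ?Z (solynin C)"
    unfolding solynin_SS using fB fZ fin_SS[OF C] by (intro Dd_triangle fin_borel)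
  also have "\<dots> \<le> ennreal (3 * d + 3 * d)"
    using D1 D2 d by (intro ennreal_tri3) auto
  finally show ?thesis by simp
qed

definition Em :: "real \<Rightarrow> real set \<Rightarrow> int set" where
  "Em d A = {n. \<exists>y\<in>A. \<lfloor>y / d\<rfloor> div 2 = n div 2}"

lemma Em_aligned: "aligned (Em d A)"
  unfolding aligned_def Em_def by (auto simp: even_succ_div_two)

lemma Em_sup: "A \<subseteq> cs d (Em d A)"
  unfolding cs_def Em_def by auto

lemma div2_close: "(a::int) div 2 = b div 2 \<Longrightarrow> b - 1 \<le> a \<and> a \<le> b + 1"
  by presburger

lemma Em_close:
  assumes d: "d > 0" and x: "x \<in> cs d (Em d A)"
  shows "\<exists>y\<in>A. \<bar>x - y\<bar> < 2 * d"
proof -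
  obtain y where y: "y \<in> A" "\<lfloor>y / d\<rfloor> div 2 = \<lfloor>x / d\<rfloor> div 2"
    using x unfolding cs_def Em_def by auto
  from div2_close[OF y(2)[symmetric]] have c: "\<lfloor>y / d\<rfloor> - 1 \<le> \<lfloor>x / d\<rfloor>" "\<lfloor>x / d\<rfloor> \<le> \<lfloor>y / d\<rfloor> + 1" by auto
  have "x / d - y / d < 2" "y / d - x / d < 2"
    using c by linarith+
  then have "\<bar>x / d - y / d\<bar> < 2" by linarith
  then have "\<bar>x - y\<bar> / d < 2" using d by (simp add: diff_divide_distrib[symmetric] abs_divide)
  then have "\<bar>x - y\<bar> < 2 * d" using d by (simp add: field_simps)
  with y show ?thesis by blast
qed

lemma Em_lower:
  assumes d: "d > 0" and R: "\<And>y. y \<in> A \<Longrightarrow> - R \<le> y" and n: "n \<in> Em d A"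
  shows "- R / d - 2 < of_int n"
proof -
  obtain y where y: "y \<in> A" "\<lfloor>y / d\<rfloor> div 2 = n div 2"
    using n unfolding Em_def by auto
  from div2_close[OF y(2)[symmetric]] have c: "\<lfloor>y / d\<rfloor> - 1 \<le> n" by auto
  have "- R / d \<le> y / d" using divide_right_mono[OF R[OF y(1)], of d] d by simp
  then show ?thesis using c by linarith
qed

lemma pow_eventually: "t > 0 \<Longrightarrow> eventually (\<lambda>m. 1 / 2 ^ m < (t::real)) sequentially"
proof -
  assume t: "t > 0"
  obtain N where N: "(1/2::real) ^ N < t" using real_arch_pow_inv[OF t, of "1/2"] by auto
  show ?thesis
  proof (rule eventually_sequentiallyI[of N])
    fix m assume "N \<le> m"
    then have "(1/2::real) ^ m \<le> (1/2) ^ N" by (intro power_decreasing) auto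
    then show "1 / 2 ^ m < t" using N by (simp add: power_one_over)
  qed
qed

lemma ennreal_tendsto0I:
  fixes f :: "nat \<Rightarrow> ennreal"
  assumes "\<And>e. e > 0 \<Longrightarrow> eventually (\<lambda>n. f n \<le> ennreal e) sequentially"
  shows "f \<longlonglongrightarrow> 0"
proof (rule order_tendstoI)
  fix a :: ennreal assume "a < 0" then show "eventually (\<lambda>n. a < f n) sequentially" by simp
next
  fix a :: ennreal assume a: "0 < a"
  obtain e where e: "0 < e" "ennreal e < a"
  proof (cases a)
    case (real r)
    then have "0 < r" using a by simp
    then show ?thesis using real by (intro that[of "r/2"]) (auto simp: ennreal_less_iff)
  next
    case top
    then show ?thesis by (intro that[of 1]) auto
  qed
  show "eventually (\<lambda>n. f n < a) sequentially"
    using assms[OF e(1)] by eventually_elim (use e(2) in auto)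
qed

theorem lemma8p3:
  fixes A :: "real set"
  assumes "compact A"
  shows "(\<lambda>m. \<integral>\<^sup>+ x. ennreal \<bar>indicator (A_m0 m A) x - indicator (solynin A) x\<bar> \<partial>lborel)
           \<longlonglongrightarrow> 0"
proof -
  have AB: "A \<in> sets borel" using assms by (simp add: compact_imp_closed)
  obtain R0 where R0: "\<forall>x\<in>A. norm x \<le> R0" using compact_imp_bounded[OF assms] unfolding bounded_iff by auto
  define R where "R = max R0 0"
  have R: "\<And>y. y \<in> A \<Longrightarrow> - R \<le> y \<and> y \<le> R" "0 \<le> R" using R0 by (auto simp: R_def abs_le_iff)
  have finA: "fin A" by (rule fin_subset[OF fin_Icc[of "-R" R] AB]) (use R in auto)
  show ?thesis
    unfolding Dd_def[symmetric]
  proof (rule ennreal_tendsto0I)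
    fix e :: real assume e: "e > 0"
    define \<epsilon> where "\<epsilon> = e / 5"
    have \<epsilon>: "\<epsilon> > 0" using e by (simp add: \<epsilon>_def)
    have "A \<in> sets lebesgue" using AB by simp
    from sets_lebesgue_outer_open[OF this \<epsilon>] obtain U where U: "open U" "A \<subseteq> U"
      "emeasure lebesgue (U - A) < ennreal \<epsilon>" by blast
    have UAB: "U - A \<in> sets borel" using U(1) AB by auto
    have UA: "emeasure lborel (U - A) < ennreal \<epsilon>" using U(3) UAB by simp
    obtain \<eta> where \<eta>: "\<eta> > 0" "(\<Union>x\<in>A. ball x \<eta>) \<subseteq> U"
      using compact_subset_open_imp_ball_epsilon_subset[OF assms U(1,2)] by blast
    have ev: "eventually (\<lambda>m. 1 / 2 ^ m < \<eta> / 2 \<and> 1 / 2 ^ m < \<epsilon> / 6 \<and> 1 / 2 ^ m < 1 / (R + 2) \<and> 1 \<le> m) sequentially"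
      using pow_eventually[of "\<eta> / 2"] pow_eventually[of "\<epsilon> / 6"] pow_eventually[of "1 / (R + 2)"]
        eventually_ge_at_top[of "1::nat"] \<eta> \<epsilon> R(2)
      by (intro eventually_conj) auto
    show "eventually (\<lambda>m. Dd (A_m0 m A) (solynin A) \<le> ennreal e) sequentially"
      using ev
    proof eventually_elim
      case (elim m)
      define d :: real where "d = 1 / 2 ^ m"
      have d: "d > 0" "2 * d < \<eta>" "6 * d < \<epsilon>" "d < 1 / (R + 2)" "1 \<le> m"
        using elim by (auto simp: d_def)
      define E where "E = Em d A"
      define C where "C = cs d E"
      define k0 :: int where "k0 = - (2 ^ (2 * m))"
      define T where "T = fold Qd [k0..0] E"
      have CB: "C \<in> sets borel" unfolding C_def by (rule cs_borel)
      have AC: "A \<subseteq> C" unfolding C_def E_def by (rule Em_sup)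
      have CU: "C \<subseteq> U"
      proof
        fix x assume "x \<in> C"
        then obtain y where "y \<in> A" "\<bar>x - y\<bar> < 2 * d" using Em_close[OF d(1)] unfolding C_def E_def by blast
        then have "x \<in> ball y \<eta>" using d by (simp add: dist_real_def)
        then show "x \<in> U" using \<eta>(2) \<open>y \<in> A\<close> by blast
      qed
      have "d \<le> 1"
      proof -
        have "0 \<le> R * d" using R(2) d(1) by simp
        moreover have "R * d + d * 2 < 1" using d(4) R(2) by (simp add: field_simps)
        ultimately show ?thesis by linarith
      qed
      have CI: "C \<subseteq> {-R-2..R+2}"
      proof
        fix x assume "x \<in> C"
        then obtain y where "y \<in> A" "\<bar>x - y\<bar> < 2 * d" using Em_close[OF d(1)] unfolding C_def E_def by blast
        then show "x \<in> {-R-2..R+2}" using R(1)[of y] \<open>d \<le> 1\<close> by auto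
      qed
      have finC: "fin C" by (rule fin_subset[OF fin_Icc CB CI])
      have "Dd A C = emeasure lborel (C - A)"
        using Dd_eq_emeasure[OF AB CB] AC by (simp add: Un_absorb1 Diff_eq_empty_iff[THEN iffD2])
      also have "\<dots> \<le> emeasure lborel (U - A)" using CU UAB by (intro emeasure_mono) auto
      finally have "Dd A C < ennreal \<epsilon>" using UA by simp
      then have ddAC: "dd A C < \<epsilon>" using Dd_fin[OF finA finC] by (simp add: ennreal_less_iff dd_nonneg)
      have ev0: "even k0" using d(5) by (simp add: k0_def)
      have k0le: "k0 \<le> 0" by (simp add: k0_def)
      have Esub: "E \<subseteq> {k0..}"
      proof
        fix n assume n: "n \<in> E"
        have low: "- R / d - 2 < of_int n" using Em_lower[OF d(1) _ n[unfolded E_def]] R(1) by auto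
        have "R + 2 < 1 / d" using d(4) R(2) d(1) by (simp add: field_simps)
        have pm: "(2::real) ^ m = 1 / d" by (simp add: d_def)
        have "real_of_int k0 = - ((1/d) * (1/d))"
          by (simp add: k0_def pm[symmetric] mult_2 power_add)
        also have "\<dots> \<le> - R / d - 2"
        proof -
          have "1 / d \<ge> 1" using \<open>d \<le> 1\<close> d(1) by (simp add: field_simps)
          have "(R + 2) * (1/d) \<le> (1/d) * (1/d)" by (rule mult_right_mono) (use \<open>R + 2 < 1 / d\<close> d(1) in auto)
          moreover have "R / d + 2 \<le> (R + 2) * (1/d)" using \<open>1 / d \<ge> 1\<close> by (simp add: algebra_simps)
          ultimately show ?thesis by simp
        qed
        finally show "n \<in> {k0..}" using low by simp
      qed
      have dinvT: "dinv 0 T E" unfolding T_def E_def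
        by (rule dinv_final[OF Em_aligned Esub[unfolded E_def] ev0 k0le])
      then obtain c h where ch: "0 \<le> c" "c \<le> 1" "0 \<le> h" "T = blk c h E"
        unfolding dinv_def by auto
      define B where "B = cs d T"
      have BB: "B \<in> sets borel" unfolding B_def by (rule cs_borel)
      have PFe: "A_m0 m X = PF d [k0..0] X" for X
        unfolding A_m0_PF d_def k0_def ..
      have D0: "Dd (PF d [k0..0] C) B = 0"
        unfolding C_def B_def T_def by (rule PF_cells[OF d(1)])
      have Bm: "emeasure lborel B = emeasure lborel C"
        using Dd_zero_emeasure[OF PF_borel[OF CB] BB D0] PF_emeasure[OF CB] by simp
      have Beq: "B = {x. of_int (c-h) * d \<le> x \<and> x < of_int (c+h) * d} \<union> (C \<inter> {of_int (c+h) * d..})"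
        unfolding B_def ch(4) C_def by (rule cs_blk[OF d(1)])
      have D3: "Dd B (solynin C) \<le> ennreal (6 * d)"
        by (rule final_block[OF finC d(1) _ ch(3) Beq Bm]) (use ch in auto)
      have D4: "Dd (solynin C) (solynin A) \<le> ennreal (3 * dd A C)"
        using S_lip[OF finA finC] by (simp add: Dd_sym)
      have D1: "Dd (PF d [k0..0] A) (PF d [k0..0] C) \<le> ennreal (dd A C)"
        using PF_contract[OF AB CB, of d "[k0..0]"] Dd_fin[OF finA finC] by simp
      have SAB: "solynin A \<in> sets borel" "solynin C \<in> sets borel"
        unfolding solynin_SS by (intro SS_borel AB CB)+
      have "Dd (A_m0 m A) (solynin A) \<le> Dd (PF d [k0..0] A) (PF d [k0..0] C) + Dd (PF d [k0..0] C) (solynin A)"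
        unfolding PFe by (intro Dd_triangle PF_borel AB CB SAB)
      also have "Dd (PF d [k0..0] C) (solynin A) \<le> Dd (PF d [k0..0] C) B + Dd B (solynin A)"
        by (intro Dd_triangle PF_borel AB CB SAB BB)
      also have "Dd B (solynin A) \<le> Dd B (solynin C) + Dd (solynin C) (solynin A)"
        by (intro Dd_triangle PF_borel AB CB SAB BB)
      finally have "Dd (A_m0 m A) (solynin A) \<le> Dd (PF d [k0..0] A) (PF d [k0..0] C) + (Dd (PF d [k0..0] C) B + (Dd B (solynin C) + Dd (solynin C) (solynin A)))"
        by (simp add: add_mono)
      also have "\<dots> \<le> ennreal (dd A C) + (0 + (ennreal (6 * d) + ennreal (3 * dd A C)))"
        unfolding D0 by (intro add_mono D1 D3 D4 order.refl)
      also have "\<dots> = ennreal (dd A C + 6 * d + 3 * dd A C)"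
        using d(1) dd_nonneg[of A C] by (simp add: ennreal_plus[symmetric] del: ennreal_plus)
      also have "\<dots> \<le> ennreal e"
        using ddAC d(3) by (intro ennreal_leI) (simp add: \<epsilon>_def)
      finally show ?case .
    qed
  qed
qed

end
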